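(* Fix any total budget $\mathrm{TB}\in\mathbb N_0$. If $G$ is a number game, then (for any budget state) both Left and Right optimally play $0$-bid strategies in $G$, i.e. bidding $0$ is optimal for each player at every follower of $G$.
   Context: Game forms are defined recursively: $G=\{G^{\mathcal L}\mid G^{\mathcal R}\}$ with finite sets of Left and Right options, and finite birthday. A follower of $G$ is a game form reachable from $G$ by a possibly empty sequence of moves. The budget set for total budget $\mathrm{TB}$ is $\mathcal B=\{0,\dots,\mathrm{TB},\hat 0,\dots,\widehat{\mathrm{TB}}\}$: state $p$ (resp. $\hat p$) means Left holds $p$ dollars and Right holds $\mathrm{TB}-p$, and Right (resp. Left) holds the tie-breaking marker. Play of $(G,\tilde p)$: at every position (terminal ones included) both players bid simultaneously, Left $\ell\in\{0,\dots,p\}$, Right $r\in\{0,\dots,\mathrm{TB}-p\}$. If Left holds the marker (state $\hat p$): if $\ell>r$ Left moves to $(G^L,\widehat{p-\ell})$, or, including the marker (allowed when $\ell\ge r$), to $(G^L,p-\ell)$; if $\ell=r$ Left wins, the marker passes to Right, play continues at $(G^L,p-\ell)$; if $\ell<r$ Right moves to $(G^R,\widehat{p+r})$. Symmetrically when Right holds the marker (state $p$): if $r>\ell$ Right moves to $(G^R,p+r)$ or, including the marker, to $(G^R,\widehat{p+r})$; if $r=\ell$ Right wins, the marker passes to Left, play continues at $(G^R,\widehat{p+r})$; if $r<\ell$ Left moves to $(G^L,p-\ell)$. A player who wins a bid but has no option loses. $o(G,\tilde p)\in\{\mathrm L,\mathrm R\}$ is the winner under optimal play. Disjunctive sum $G+H=\{G^{\mathcal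 L}+H,G+H^{\mathcal L}\mid G^{\mathcal R}+H,G+H^{\mathcal R}\}$. $G\ge H$ means $o(G+X,\tilde p)\ge o(H+X,\tilde p)$ for all game forms $X$ and all $\tilde p\in\mathcal B$ (with $\mathrm L>\mathrm R$); $G>H$ means $G\ge H$ and not $H\ge G$. A game form $G$ is a number if all its options are numbers and $G^L<G<G^R$ for all $G^L\in G^{\mathcal L}$, $G^R\in G^{\mathcal R}$. *)

theory Defs
  imports Main "HOL-Library.FSet"
begin

text \<open>A game form: finite sets of Left and Right options; finite birthday is
automatic for an inductive datatype.\<close>
datatype game = Game (lopts: "game fset") (ropts: "game fset")

lemma size_fset_mem: "g |\<in>| A \<Longrightarrow> size g < size_fset size A"
proof -
  assume "g |\<in>| A"
  then have "Suc (size g) \<le> (\<Sum>x\<in>fset A. Suc (size x))"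
    by (intro member_le_sum) auto
  then show ?thesis by simp
qed

lemma size_lopts: "g |\<in>| lopts G \<Longrightarrow> size g < size G"
  by (cases G) (auto dest: size_fset_mem)
lemma size_ropts: "g |\<in>| ropts G \<Longrightarrow> size g < size G"
  by (cases G) (auto dest: size_fset_mem)

function plus_game :: "game \<Rightarrow> game \<Rightarrow> game" where
  "plus_game G H =
     Game ((\<lambda>g. plus_game g H) |`| lopts G |\<union>| (\<lambda>h. plus_game G h) |`| lopts H)
          ((\<lambda>g. plus_game g H) |`| ropts G |\<union>| (\<lambda>h. plus_game G h) |`| ropts H)"
  by auto
termination
  by (relation "measure (\<lambda>(G, H). size G + size H)")
     (auto dest: size_lopts size_ropts)


text \<open>Budget state: a pair (p, m) with p \<le> TB; m = True encodes the state
\<open>p\<close>-hat (Left holds the tie-breaking marker), m = False the state p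
(Right holds the marker).  Left holds p dollars, Right holds TB - p.\<close>

definition budget_states :: "nat \<Rightarrow> (nat \<times> bool) set" where
  "budget_states TB = {(p, m). p \<le> TB}"

definition left_wins_bid :: "bool \<Rightarrow> nat \<Rightarrow> nat \<Rightarrow> bool" where
  "left_wins_bid m l r = (if m then r \<le> l else r < l)"

text \<open>Marker flags that the winner of the bid may choose for the next state.
Left winning with the marker: if l > r Left may keep it or include it; if
l = r it passes to Right.  Left winning without the marker: stays with Right.
Symmetrically for Right.\<close>
definition left_marker_choices :: "bool \<Rightarrow> nat \<Rightarrow> nat \<Rightarrow> bool set" where
  "left_marker_choices m l r = (if m \<and> r < l then {True, False} else {False})"

definition right_marker_choices :: "bool \<Rightarrow> nat \<Rightarrow> nat \<Rightarrow> bool set" where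
  "right_marker_choices m l r = (if \<not> m \<and> l < r then {True, False} else {True})"

text \<open>Result (True = Left wins) of one bidding round given the outcome
functions of the Left options LO and the Right options RO.  The bid winner
moves (paying its bid to the opponent) and chooses the option and the
allowed marker placement; a bid winner without options loses.\<close>
definition resolve ::
  "(nat \<Rightarrow> bool \<Rightarrow> bool) fset \<Rightarrow> (nat \<Rightarrow> bool \<Rightarrow> bool) fset \<Rightarrow> nat \<Rightarrow> bool \<Rightarrow> nat \<Rightarrow> nat \<Rightarrow> bool"
where
  "resolve LO RO p m l r =
     (if left_wins_bid m l r
      then (\<exists>w\<in>fset LO. \<exists>m'\<in>left_marker_choices m l r. w (p - l) m')
      else (\<forall>w\<in>fset RO. \<forall>m'\<in>right_marker_choices m l r. w (p + r) m'))"

primrec outc :: "nat \<Rightarrow> game \<Rightarrow> nat \<Rightarrow> bool \<Rightarrow> bool" where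
  "outc TB (Game GL GR) =
     (\<lambda>p m. \<exists>l\<le>p. \<forall>r\<le>TB - p. resolve (outc TB |`| GL) (outc TB |`| GR) p m l r)"

definition round_val :: "nat \<Rightarrow> game \<Rightarrow> nat \<Rightarrow> bool \<Rightarrow> nat \<Rightarrow> nat \<Rightarrow> bool" where
  "round_val TB G p m l r = resolve (outc TB |`| lopts G) (outc TB |`| ropts G) p m l r"

definition game_ge :: "nat \<Rightarrow> game \<Rightarrow> game \<Rightarrow> bool" where
  "game_ge TB G H = (\<forall>X p m. (p, m) \<in> budget_states TB \<longrightarrow>
      (outc TB (plus_game H X) p m \<longrightarrow> outc TB (plus_game G X) p m))"

definition game_gt :: "nat \<Rightarrow> game \<Rightarrow> game \<Rightarrow> bool" where
  "game_gt TB G H = (game_ge TB G H \<and> \<not> game_ge TB H G)"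

inductive is_number :: "nat \<Rightarrow> game \<Rightarrow> bool" for TB where
  "\<lbrakk>\<forall>g\<in>fset (lopts G). is_number TB g; \<forall>g\<in>fset (ropts G). is_number TB g;
    \<forall>g\<in>fset (lopts G). game_gt TB G g; \<forall>g\<in>fset (ropts G). game_gt TB g G\<rbrakk>
   \<Longrightarrow> is_number TB G"

inductive follower :: "game \<Rightarrow> game \<Rightarrow> bool" where
  refl: "follower G G"
| step: "\<lbrakk>follower G H; H' \<in> fset (lopts H) \<union> fset (ropts H)\<rbrakk> \<Longrightarrow> follower G H'"

definition zero_opt_left :: "nat \<Rightarrow> game \<Rightarrow> nat \<Rightarrow> bool \<Rightarrow> bool" where
  "zero_opt_left TB H p m =
     (outc TB H p m \<longrightarrow> (\<forall>r\<le>TB - p. round_val TB H p m 0 r))"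

definition zero_opt_right :: "nat \<Rightarrow> game \<Rightarrow> nat \<Rightarrow> bool \<Rightarrow> bool" where
  "zero_opt_right TB H p m =
     (\<not> outc TB H p m \<longrightarrow> (\<forall>l\<le>p. \<not> round_val TB H p m l 0))"

end

theory Submission
  imports Defs
begin

declare plus_game.simps[simp del]

definition zgame :: game where "zgame = Game {||} {||}"

lemma plus_zero: "plus_game G zgame = G"
proof (induction G rule: measure_induct_rule[where f=size])
  case (less G)
  obtain GL GR where G: "G = Game GL GR" by (cases G)
  have l: "(\<lambda>g. plus_game g zgame) |`| GL = GL"
    by (rule fset.map_ident_strong) (metis less G size_lopts game.sel(1))
  have r: "(\<lambda>g. plus_game g zgame) |`| GR = GR"
    by (rule fset.map_ident_strong) (metis less G size_ropts game.sel(2))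
  show ?case using l r G by (subst plus_game.simps) (simp add: zgame_def)
qed

lemma gt_mono:
  assumes "game_gt TB G g" "q \<le> TB" "outc TB g q m"
  shows "outc TB G q m"
  using assms plus_zero[of G] plus_zero[of g]
  unfolding game_gt_def game_ge_def budget_states_def
  by (metis (mono_tags, lifting) case_prodI mem_Collect_eq)
primrec alt :: "game \<Rightarrow> bool \<Rightarrow> bool" where
  "alt (Game GL GR) = (\<lambda>m. if m then (\<exists>w\<in>fset (alt |`| GL). w False)
                          else (\<forall>w\<in>fset (alt |`| GR). w True))"

lemma alt_simp: "alt H m = (if m then (\<exists>g\<in>fset (lopts H). alt g False)
                          else (\<forall>g\<in>fset (ropts H). alt g True))"
  by (cases H) (auto simp: fimage.rep_eq)

lemma outc_simp: "outc TB H p m = (\<exists>l\<le>p. \<forall>r\<le>TB - p. round_val TB H p m l r)"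
  by (cases H) (simp add: round_val_def)

lemma rv_simp: "round_val TB H p m l r =
     (if left_wins_bid m l r
      then (\<exists>g\<in>fset (lopts H). \<exists>m'\<in>left_marker_choices m l r. outc TB g (p - l) m')
      else (\<forall>g\<in>fset (ropts H). \<forall>m'\<in>right_marker_choices m l r. outc TB g (p + r) m'))"
  by (simp add: round_val_def resolve_def fimage.rep_eq)

lemma rv_T00: "round_val TB H p True 0 0 = (\<exists>g\<in>fset (lopts H). outc TB g p False)"
  by (simp add: rv_simp left_wins_bid_def left_marker_choices_def)
lemma rv_T0r: "0 < r \<Longrightarrow> round_val TB H p True 0 r = (\<forall>g\<in>fset (ropts H). outc TB g (p + r) True)"
  by (simp add: rv_simp left_wins_bid_def right_marker_choices_def)
lemma rv_F00: "round_val TB H p False 0 0 = (\<forall>g\<in>fset (ropts H). outc TB g p True)"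
  by (simp add: rv_simp left_wins_bid_def right_marker_choices_def)
lemma rv_F0r: "0 < r \<Longrightarrow> round_val TB H p False 0 r =
   (\<forall>g\<in>fset (ropts H). outc TB g (p + r) True \<and> outc TB g (p + r) False)"
  by (auto simp add: rv_simp left_wins_bid_def right_marker_choices_def)
lemma rv_Tl0: "0 < l \<Longrightarrow> round_val TB H p True l 0 =
   (\<exists>g\<in>fset (lopts H). outc TB g (p - l) True \<or> outc TB g (p - l) False)"
  by (auto simp add: rv_simp left_wins_bid_def left_marker_choices_def)
lemma rv_Fl0: "0 < l \<Longrightarrow> round_val TB H p False l 0 = (\<exists>g\<in>fset (lopts H). outc TB g (p - l) False)"
  by (simp add: rv_simp left_wins_bid_def left_marker_choices_def)
lemma alt_T: "alt H True = (\<exists>g\<in>fset (lopts H). alt g False)" using alt_simp[of H True] by simp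
lemma alt_F: "alt H False = (\<forall>g\<in>fset (ropts H). alt g True)" using alt_simp[of H False] by simp

lemma main_inv:
  assumes "is_number TB H"
  shows "\<forall>q m. q \<le> TB \<longrightarrow> outc TB H q m = alt H m"
  using assms
proof (induction H rule: is_number.induct)
  case (1 G)
  have ihL: "outc TB g q m = alt g m" if "g \<in> fset (lopts G)" "q \<le> TB" for g q m
    using conjunct2[OF 1(1)[rule_format, OF that(1)]] that(2) by blast
  have ihR: "outc TB g q m = alt g m" if "g \<in> fset (ropts G)" "q \<le> TB" for g q m
    using conjunct2[OF 1(2)[rule_format, OF that(1)]] that(2) by blast
  have oL: "outc TB G q m" if "g \<in> fset (lopts G)" "q \<le> TB" "outc TB g q m" for g q m
    by (rule gt_mono[OF 1(3)[rule_format, OF that(1)] that(2,3)])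
  have oR: "outc TB g q m" if "g \<in> fset (ropts G)" "q \<le> TB" "outc TB G q m" for g q m
    by (rule gt_mono[OF 1(4)[rule_format, OF that(1)] that(2,3)])
  have up: "\<forall>q m. TB - q = k \<longrightarrow> q \<le> TB \<longrightarrow> alt G m \<longrightarrow> outc TB G q m" for k
  proof (induction k rule: less_induct)
    case (less k)
    show ?case
    proof (intro allI impI)
      fix q m assume k: "TB - q = k" and q: "q \<le> TB" and a: "alt G m"
      have IH: "\<And>q' m'. q < q' \<Longrightarrow> q' \<le> TB \<Longrightarrow> alt G m' \<Longrightarrow> outc TB G q' m'"
      proof -
        fix q' m' assume "q < q'" "q' \<le> TB" "alt G m'"
        moreover have "TB - q' < k" using k \<open>q < q'\<close> \<open>q' \<le> TB\<close> by simp
        ultimately show "outc TB G q' m'" using less.IH by blast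
      qed
      have "round_val TB G q m 0 r" if r: "r \<le> TB - q" for r
      proof (cases m)
        case True
        show ?thesis
        proof (cases "r = 0")
          case True
          then show ?thesis using \<open>m\<close> a q ihL by (simp add: rv_T00 alt_T[of G])
        next
          case False
          have "outc TB G (q + r) True" using IH[of "q+r" True] False r q a \<open>m\<close> by simp
          then show ?thesis using \<open>m\<close> False r q oR by (simp add: rv_T0r)
        qed
      next
        case False
        have a': "\<forall>g\<in>fset (ropts G). alt g True" using False a alt_F[of G] by simp
        show ?thesis
        proof (cases "r = 0")
          case True
          then show ?thesis using False a' q ihR by (simp add: rv_F00)
        next
          case r0: False
          have "outc TB G (q + r) False" using IH[of "q+r" False] r0 r q a False by simp
          then have "\<forall>g\<in>fset (ropts G). outc TB g (q + r) False" using oR r q by simp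
          moreover have "\<forall>g\<in>fset (ropts G). outc TB g (q + r) True" using a' ihR r q by simp
          ultimately show ?thesis using False r0 rv_F0r by simp
        qed
      qed
      then show "outc TB G q m" unfolding outc_simp[of TB G q m] by blast
    qed
  qed
  have down: "\<forall>m. q \<le> TB \<longrightarrow> \<not> alt G m \<longrightarrow> \<not> outc TB G q m" for q
  proof (induction q rule: less_induct)
    case (less q)
    show ?case
    proof (intro allI impI)
      fix m assume q: "q \<le> TB" and a: "\<not> alt G m"
      have IH: "\<And>q' m'. q' < q \<Longrightarrow> \<not> alt G m' \<Longrightarrow> \<not> outc TB G q' m'"
        using less q by simp
      have "\<not> round_val TB G q m l 0" if l: "l \<le> q" for l
      proof (cases m)
        case True
        have a': "\<forall>g\<in>fset (lopts G). \<not> alt g False" using True a alt_T[of G] by simp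
        show ?thesis
        proof (cases "l = 0")
          case True
          then show ?thesis using \<open>m\<close> a' q ihL by (simp add: rv_T00)
        next
          case l0: False
          have "\<not> outc TB G (q - l) True" using IH[of "q-l" True] l0 l a True by simp
          then have "\<forall>g\<in>fset (lopts G). \<not> outc TB g (q - l) True" using oL q by force
          moreover have "\<forall>g\<in>fset (lopts G). \<not> outc TB g (q - l) False" using a' ihL q by simp
          ultimately show ?thesis using True l0 rv_Tl0 by simp
        qed
      next
        case False
        show ?thesis
        proof (cases "l = 0")
          case True
          then show ?thesis using \<open>\<not> m\<close> a q ihR by (simp add: rv_F00 alt_F[of G])
        next
          case l0: False
          have "\<not> outc TB G (q - l) False" using IH[of "q-l" False] l0 l a False by simp
          then have "\<forall>g\<in>fset (lopts G). \<not> outc TB g (q - l) False" using oL q by force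
          then show ?thesis using False l0 rv_Fl0 by simp
        qed
      qed
      then show "\<not> outc TB G q m" unfolding outc_simp[of TB G q m] by (metis diff_le_self le0)
    qed
  qed
  show ?case
  proof (intro allI impI)
    fix q m assume q: "q \<le> TB"
    show "outc TB G q m = alt G m"
    proof (cases "alt G m")
      case True
      then show ?thesis using up[of "TB - q"] q by simp
    next
      case False
      then show ?thesis using down[of q] q by simp
    qed
  qed
qed

lemma follower_number: "follower G H \<Longrightarrow> is_number TB G \<Longrightarrow> is_number TB H"
  by (induction rule: follower.induct) (auto elim: is_number.cases)

lemma zero_opt_num:
  assumes N: "is_number TB H" and p: "p \<le> TB"
  shows "zero_opt_left TB H p m \<and> zero_opt_right TB H p m"
proof -
  have inv: "\<And>q m. q \<le> TB \<Longrightarrow> outc TB H q m = alt H m" using main_inv N by blast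
  have nL: "\<And>g. g \<in> fset (lopts H) \<Longrightarrow> is_number TB g \<and> game_gt TB H g"
    using N by (auto elim: is_number.cases)
  have nR: "\<And>g. g \<in> fset (ropts H) \<Longrightarrow> is_number TB g \<and> game_gt TB g H"
    using N by (auto elim: is_number.cases)
  have iL: "\<And>g q m. g \<in> fset (lopts H) \<Longrightarrow> q \<le> TB \<Longrightarrow> outc TB g q m = alt g m"
    using nL main_inv by blast
  have iR: "\<And>g q m. g \<in> fset (ropts H) \<Longrightarrow> q \<le> TB \<Longrightarrow> outc TB g q m = alt g m"
    using nR main_inv by blast
  have oL: "\<And>g m. g \<in> fset (lopts H) \<Longrightarrow> alt g m \<Longrightarrow> alt H m"
    using nL iL inv gt_mono by (metis le0)
  have oR: "\<And>g m. g \<in> fset (ropts H) \<Longrightarrow> alt H m \<Longrightarrow> alt g m"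
    using nR iR inv gt_mono by (metis le0)
  have L: "round_val TB H p m 0 r" if a: "alt H m" and r: "r \<le> TB - p" for r
  proof -
    have pr: "p + r \<le> TB" using r p by auto
    show ?thesis
    proof (cases m)
      case True
      show ?thesis
      proof (cases "r = 0")
        case True
        then show ?thesis using \<open>m\<close> a p iL by (simp add: rv_T00 alt_T[of H])
      next
        case False
        have aT: "alt H True" using a \<open>m\<close> by simp
        have "\<forall>g\<in>fset (ropts H). outc TB g (p + r) True"
        proof
          fix g assume g: "g \<in> fset (ropts H)"
          show "outc TB g (p + r) True" using iR[OF g pr] oR[OF g aT] by simp
        qed
        then show ?thesis using \<open>m\<close> False by (simp add: rv_T0r)
      qed
    next
      case False
      have a': "\<forall>g\<in>fset (ropts H). alt g True" using False a alt_F[of H] by simp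
      show ?thesis
      proof (cases "r = 0")
        case True
        then show ?thesis using False a' p iR by (simp add: rv_F00)
      next
        case r0: False
        have aF: "alt H False" using a False by simp
        have "\<forall>g\<in>fset (ropts H). outc TB g (p + r) False"
        proof
          fix g assume g: "g \<in> fset (ropts H)"
          show "outc TB g (p + r) False" using iR[OF g pr] oR[OF g aF] by simp
        qed
        moreover have "\<forall>g\<in>fset (ropts H). outc TB g (p + r) True"
        proof
          fix g assume g: "g \<in> fset (ropts H)"
          show "outc TB g (p + r) True" using iR[OF g pr] a' g by simp
        qed
        ultimately show ?thesis using False r0 rv_F0r by simp
      qed
    qed
  qed
  have R: "\<not> round_val TB H p m l 0" if a: "\<not> alt H m" and l: "l \<le> p" for l
  proof -
    have pl: "p - l \<le> TB" using l p by auto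
    show ?thesis
    proof (cases m)
      case True
      have a': "\<forall>g\<in>fset (lopts H). \<not> alt g False" using True a alt_T[of H] by simp
      show ?thesis
      proof (cases "l = 0")
        case True
        then show ?thesis using \<open>m\<close> a' p iL by (simp add: rv_T00)
      next
        case l0: False
        have aT: "\<not> alt H True" using a True by simp
        have "\<forall>g\<in>fset (lopts H). \<not> outc TB g (p - l) True"
        proof
          fix g assume g: "g \<in> fset (lopts H)"
          show "\<not> outc TB g (p - l) True" using iL[OF g pl] oL[OF g] aT by auto
        qed
        moreover have "\<forall>g\<in>fset (lopts H). \<not> outc TB g (p - l) False"
        proof
          fix g assume g: "g \<in> fset (lopts H)"
          show "\<not> outc TB g (p - l) False" using iL[OF g pl] a' g by simp
        qed
        ultimately show ?thesis using True l0 rv_Tl0 by simp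
      qed
    next
      case False
      show ?thesis
      proof (cases "l = 0")
        case True
        then show ?thesis using \<open>\<not> m\<close> a p iR by (simp add: rv_F00 alt_F[of H])
      next
        case l0: False
        have aF: "\<not> alt H False" using a False by simp
        have "\<forall>g\<in>fset (lopts H). \<not> outc TB g (p - l) False"
        proof
          fix g assume g: "g \<in> fset (lopts H)"
          show "\<not> outc TB g (p - l) False" using iL[OF g pl] oL[OF g] aF by auto
        qed
        then show ?thesis using False l0 rv_Fl0 by simp
      qed
    qed
  qed
  show ?thesis unfolding zero_opt_left_def zero_opt_right_def using L R inv p by blast
qed

theorem mainTheorem5:
  fixes TB :: nat and G :: game
  assumes "is_number TB G"
  shows "\<forall>H p m. follower G H \<longrightarrow> (p, m) \<in> budget_states TB \<longrightarrow>
           zero_opt_left TB H p m \<and> zero_opt_right TB H p m"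
  using assms follower_number zero_opt_num by (auto simp: budget_states_def)

end
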